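(* Let $\mathbf{\Sigma}$ be a cluster pattern of rank $n$ with free coefficients at $t_0$. Then the seed $\Sigma_t$ is coprime for every $t\in\mathbb{T}_n$.
   Context: A semifield is a multiplicative abelian group with a commutative, associative addition $\oplus$ satisfying $(a\oplus b)c=ac\oplus bc$. For formal variables $\mathbf{y}=(y_1,\dots,y_n)$, the universal semifield $\mathbb{Q}_{\mathrm{sf}}(\mathbf{y})$ consists of rational functions expressible as ratios of nonzero polynomials with nonnegative integer coefficients. A seed with coefficients in a semifield $\mathbb{P}$ is $(\mathbf{x},\mathbf{y},B)$ with $\mathbf{x}$ a generating transcendence basis of an ambient field $\mathcal{F}\cong\mathbb{Q}\mathbb{P}(u_1,\dots,u_n)$ over the fraction field $\mathbb{Q}\mathbb{P}$ of the group ring $\mathbb{Z}\mathbb{P}$, $\mathbf{y}\in\mathbb{P}^n$, $B$ an $n\times n$ skew-symmetrizable integer matrix. With $[a]_+=\max(a,0)$ and $\hat y_i=y_i\prod_jx_j^{b_{ji}}$, the mutation $\mu_k$ is: $x'_k=x_k^{-1}\big(\prod_{j}x_j^{[-b_{jk}]_+}\big)\frac{1+\hat y_k}{1\oplus y_k}$, $x'_i=x_i$ ($i\ne k$); $y'_k=y_k^{-1}$, $y'_i=y_iy_k^{[b_{ki}]_+}(1\oplus y_k)^{-b_{ki}}$ ($i\neq k$); $b'_{ij}=-b_{ij}$ if $i=k$ or $j=k$, and $b'_{ij}=b_{ij}+b_{ik}[b_{kj}]_++[-b_{ik}]_+b_{kj}$ otherwise. $\mathbb{T}_n$ is the $n$-regular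 tree with edges labeled $1,\dots,n$, distinct at each vertex. A cluster pattern is $\{\Sigma_t=(\mathbf{x}_t,\mathbf{y}_t,B_t)\}_{t\in\mathbb{T}_n}$ with $\Sigma_{t'}=\mu_k(\Sigma_t)$ whenever $t,t'$ are joined by an edge labeled $k$. It has free coefficients at $t_0$ if its coefficient semifield is $\mathbb{Q}_{\mathrm{sf}}(\mathbf{y})$ and $\mathbf{y}_{t_0}=\mathbf{y}$. For a seed $\Sigma_t$ and $k=1,\dots,n$, let $P_{k;t}=\frac{1}{1\oplus y_{k;t}}\big(y_{k;t}\prod_jx_{j;t}^{[b_{jk;t}]_+}+\prod_jx_{j;t}^{[-b_{jk;t}]_+}\big)\in\mathbb{Z}\mathbb{P}[\mathbf{x}_t]$. The seed $\Sigma_t$ is coprime if $P_{1;t},\dots,P_{n;t}$ are pairwise coprime in $\mathbb{Z}\mathbb{P}[\mathbf{x}_t]$, i.e. any common factor of $P_{i;t}$ and $P_{j;t}$ ($i\ne j$) lies in $\mathbb{Z}\mathbb{P}^{\times}=\{\pm1\}\mathbb{P}$. *)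

theory Defs
  imports Complex_Main "HOL-Library.Poly_Mapping" "HOL-Computational_Algebra.Fraction_Field"
begin

text \<open>Multivariate polynomials over Q in variables y_0,...,y_(n-1) (0-based indices),
  and their fraction field Q(y).\<close>
type_synonym mpq = "(nat \<Rightarrow>\<^sub>0 nat) \<Rightarrow>\<^sub>0 rat"
type_synonym rf = "mpq fract"

definition nnpoly :: "nat \<Rightarrow> mpq \<Rightarrow> bool" where
  "nnpoly n p \<longleftrightarrow> p \<noteq> 0 \<and> (\<forall>m. Poly_Mapping.lookup p m \<in> \<nat>) \<and> (\<forall>m::nat \<Rightarrow>\<^sub>0 nat. m \<in> Poly_Mapping.keys p \<longrightarrow> Poly_Mapping.keys m \<subseteq> {..<n})"

text \<open>The universal semifield: ratios of such polynomials; its multiplication is that of Q(y)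
  and its semifield addition is the ordinary addition of Q(y).\<close>
definition Qsf :: "nat \<Rightarrow> rf set" where
  "Qsf n = {Fract p q | p q. nnpoly n p \<and> nnpoly n q}"

definition yvar :: "nat \<Rightarrow> rf" where
  "yvar i = Fract (Poly_Mapping.single (Poly_Mapping.single i 1) 1) 1"

datatype 'a mkey = MK 'a "nat \<Rightarrow>\<^sub>0 nat"

instantiation mkey :: (comm_monoid_mult) comm_monoid_add
begin
fun plus_mkey :: "'a mkey \<Rightarrow> 'a mkey \<Rightarrow> 'a mkey" where
  "plus_mkey (MK a \<alpha>) (MK b \<beta>) = MK (a * b) (\<alpha> + \<beta>)"
definition zero_mkey :: "'a mkey" where
  "zero_mkey = MK 1 0"
instance
proof
  fix a b c :: "'a mkey"
  show "a + b + c = a + (b + c)"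
    by (cases a; cases b; cases c) (simp_all add: ac_simps)
  show "a + b = b + a"
    by (cases a; cases b) (simp_all add: ac_simps)
  show "0 + a = a"
    by (cases a) (simp_all add: zero_mkey_def)
qed
end

text \<open>Elements of the monoid ring Z[rf x N^n]; an element MK p \<alpha> stands for the group-ring
  element p times the monomial X^\<alpha>.\<close>
type_synonym zpx = "rf mkey \<Rightarrow>\<^sub>0 int"

definition ZPX :: "nat \<Rightarrow> rf set \<Rightarrow> zpx set" where
  "ZPX n P = {f. \<forall>k\<in>Poly_Mapping.keys f. case k of MK a \<alpha> \<Rightarrow> a \<in> P \<and> Poly_Mapping.keys \<alpha> \<subseteq> {..<n}}"

definition ZPunits :: "rf set \<Rightarrow> zpx set" where
  "ZPunits P = {Poly_Mapping.single (MK p 0) c | p c. p \<in> P \<and> (c = 1 \<or> c = -1)}"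

definition rdvd :: "zpx set \<Rightarrow> zpx \<Rightarrow> zpx \<Rightarrow> bool" where
  "rdvd R d a \<longleftrightarrow> (\<exists>e\<in>R. a = d * e)"

definition pos :: "int \<Rightarrow> int" where
  "pos a = max a 0"

definition expv :: "nat \<Rightarrow> (nat \<Rightarrow> nat) \<Rightarrow> nat \<Rightarrow>\<^sub>0 nat" where
  "expv n f = Abs_poly_mapping (\<lambda>j. if j < n then f j else 0)"

definition Ppoly :: "nat \<Rightarrow> (nat \<Rightarrow> rf) \<Rightarrow> (nat \<Rightarrow> nat \<Rightarrow> int) \<Rightarrow> nat \<Rightarrow> zpx" where
  "Ppoly n y B k =
     Poly_Mapping.single (MK (y k / (1 + y k)) (expv n (\<lambda>j. nat (pos (B j k))))) 1
   + Poly_Mapping.single (MK (1 / (1 + y k)) (expv n (\<lambda>j. nat (pos (- B j k))))) 1"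

definition coprime_seed :: "nat \<Rightarrow> rf set \<Rightarrow> (nat \<Rightarrow> rf) \<Rightarrow> (nat \<Rightarrow> nat \<Rightarrow> int) \<Rightarrow> bool" where
  "coprime_seed n P y B \<longleftrightarrow>
     (\<forall>i<n. \<forall>j<n. i \<noteq> j \<longrightarrow>
        (\<forall>d\<in>ZPX n P. rdvd (ZPX n P) d (Ppoly n y B i) \<and> rdvd (ZPX n P) d (Ppoly n y B j)
            \<longrightarrow> d \<in> ZPunits P))"

definition skew_symmetrizable :: "nat \<Rightarrow> (nat \<Rightarrow> nat \<Rightarrow> int) \<Rightarrow> bool" where
  "skew_symmetrizable n B \<longleftrightarrow>
     (\<exists>d :: nat \<Rightarrow> int. (\<forall>i<n. d i > 0) \<and> (\<forall>i<n. \<forall>j<n. d i * B i j = - (d j * B j i)))"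

definition mut_y :: "nat \<Rightarrow> (nat \<Rightarrow> rf) \<Rightarrow> (nat \<Rightarrow> nat \<Rightarrow> int) \<Rightarrow> nat \<Rightarrow> rf" where
  "mut_y k y B = (\<lambda>i. if i = k then inverse (y k)
                      else y i * (y k) powi (pos (B k i)) * (1 + y k) powi (- B k i))"

definition mut_B :: "nat \<Rightarrow> (nat \<Rightarrow> nat \<Rightarrow> int) \<Rightarrow> nat \<Rightarrow> nat \<Rightarrow> int" where
  "mut_B k B = (\<lambda>i j. if i = k \<or> j = k then - B i j
                       else B i j + B i k * pos (B k j) + pos (- B i k) * B k j)"

fun mut_seq :: "(nat \<Rightarrow> rf) \<times> (nat \<Rightarrow> nat \<Rightarrow> int) \<Rightarrow> nat list
                  \<Rightarrow> (nat \<Rightarrow> rf) \<times> (nat \<Rightarrow> nat \<Rightarrow> int)" where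
  "mut_seq s [] = s"
| "mut_seq (y, B) (k # ks) = mut_seq (mut_y k y B, mut_B k B) ks"

end

theory Submission
  imports Defs
begin


lemma pm_expand:
  fixes p :: "'k \<Rightarrow>\<^sub>0 'v::comm_monoid_add"
  shows "p = (\<Sum>m\<in>Poly_Mapping.keys p. Poly_Mapping.single m (Poly_Mapping.lookup p m))"
proof (rule poly_mapping_eqI)
  fix k
  have "Poly_Mapping.lookup (\<Sum>m\<in>Poly_Mapping.keys p. Poly_Mapping.single m (Poly_Mapping.lookup p m)) k
      = (\<Sum>m\<in>Poly_Mapping.keys p. Poly_Mapping.lookup p m when m = k)"
    by (simp add: lookup_sum lookup_single)
  also have "\<dots> = Poly_Mapping.lookup p k"
    by (cases "k \<in> Poly_Mapping.keys p") (auto simp: when_def in_keys_iff)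
  finally show "Poly_Mapping.lookup p k = Poly_Mapping.lookup (\<Sum>m\<in>Poly_Mapping.keys p. Poly_Mapping.single m (Poly_Mapping.lookup p m)) k" by simp
qed

lemma pm_mult_expand:
  fixes p q :: "'k::comm_monoid_add \<Rightarrow>\<^sub>0 'v::comm_semiring_0"
  shows "p * q = (\<Sum>a\<in>Poly_Mapping.keys p. \<Sum>b\<in>Poly_Mapping.keys q.
             Poly_Mapping.single (a + b) (Poly_Mapping.lookup p a * Poly_Mapping.lookup q b))"
proof -
  have "p * q = (\<Sum>a\<in>Poly_Mapping.keys p. Poly_Mapping.single a (Poly_Mapping.lookup p a)) *
                (\<Sum>b\<in>Poly_Mapping.keys q. Poly_Mapping.single b (Poly_Mapping.lookup q b))"
    by (metis pm_expand)
  also have "\<dots> = (\<Sum>a\<in>Poly_Mapping.keys p. \<Sum>b\<in>Poly_Mapping.keys q.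
             Poly_Mapping.single a (Poly_Mapping.lookup p a) * Poly_Mapping.single b (Poly_Mapping.lookup q b))"
    by (simp only: sum_product)
  finally show ?thesis by (simp add: mult_single)
qed

lemma lookup_mult_expand:
  fixes p q :: "'k::comm_monoid_add \<Rightarrow>\<^sub>0 'v::comm_semiring_0"
  shows "Poly_Mapping.lookup (p * q) k = (\<Sum>a\<in>Poly_Mapping.keys p. \<Sum>b\<in>Poly_Mapping.keys q.
             (Poly_Mapping.lookup p a * Poly_Mapping.lookup q b when a + b = k))"
  by (subst pm_mult_expand) (simp add: lookup_sum lookup_single)

lemma ext_term:
  fixes f g :: "'k::comm_monoid_add \<Rightarrow>\<^sub>0 'v::comm_semiring_0"
  assumes trans: "\<And>x y z. lt x y \<Longrightarrow> lt y z \<Longrightarrow> lt x z"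
    and irr: "\<And>x. \<not> lt x x"
    and compat: "\<And>x y z. x \<in> K \<Longrightarrow> y \<in> K \<Longrightarrow> z \<in> K \<Longrightarrow> lt x y \<Longrightarrow> lt (x + z) (y + z)"
    and kf: "Poly_Mapping.keys f \<subseteq> K" and kg: "Poly_Mapping.keys g \<subseteq> K"
    and m: "m \<in> Poly_Mapping.keys f" "\<And>x. x \<in> Poly_Mapping.keys f \<Longrightarrow> x = m \<or> lt x m"
    and m': "m' \<in> Poly_Mapping.keys g" "\<And>x. x \<in> Poly_Mapping.keys g \<Longrightarrow> x = m' \<or> lt x m'"
  shows "Poly_Mapping.lookup (f * g) (m + m') = Poly_Mapping.lookup f m * Poly_Mapping.lookup g m'"
    and "\<And>k. k \<in> Poly_Mapping.keys (f * g) \<Longrightarrow> k = m + m' \<or> lt k (m + m')"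
proof -
  have key: "lt (a + b) (m + m')" if "a \<in> Poly_Mapping.keys f" "b \<in> Poly_Mapping.keys g" "(a, b) \<noteq> (m, m')" for a b
  proof -
    have aK: "a \<in> K" "b \<in> K" "m \<in> K" "m' \<in> K" using that kf kg m m' by auto
    have c2: "lt (m + b) (m + m')" if "lt b m'"
      using compat[of b m' m] that aK by (simp add: add.commute)
    show ?thesis
    proof (cases "a = m")
      case True
      then have "b \<noteq> m'" using that by auto
      then have "lt b m'" using m'(2) that by auto
      with True c2 show ?thesis by simp
    next
      case False
      then have am: "lt a m" using m(2) that by auto
      then have 1: "lt (a + b) (m + b)" using compat aK by auto
      show ?thesis
      proof (cases "b = m'")
        case True then show ?thesis using 1 by simp
      next
        case False
        then have "lt b m'" using m'(2) that by auto
        then show ?thesis using 1 c2 trans by blast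
      qed
    qed
  qed
  have "Poly_Mapping.lookup (f * g) (m + m') = (\<Sum>a\<in>Poly_Mapping.keys f. \<Sum>b\<in>Poly_Mapping.keys g.
             (Poly_Mapping.lookup f a * Poly_Mapping.lookup g b when a + b = m + m'))"
    by (rule lookup_mult_expand)
  also have "\<dots> = (\<Sum>a\<in>Poly_Mapping.keys f. \<Sum>b\<in>Poly_Mapping.keys g.
             (Poly_Mapping.lookup f a * Poly_Mapping.lookup g b when (a, b) = (m, m')))"
  proof (intro sum.cong refl)
    fix a b assume ab: "a \<in> Poly_Mapping.keys f" "b \<in> Poly_Mapping.keys g"
    show "(Poly_Mapping.lookup f a * Poly_Mapping.lookup g b when a + b = m + m') =
          (Poly_Mapping.lookup f a * Poly_Mapping.lookup g b when (a, b) = (m, m'))"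
      using key[OF ab] irr by (cases "(a, b) = (m, m')") (auto simp: when_def)
  qed
  also have "\<dots> = (\<Sum>a\<in>Poly_Mapping.keys f. (Poly_Mapping.lookup f a * Poly_Mapping.lookup g m' when a = m))"
  proof (rule sum.cong[OF refl])
    fix a
    have "(\<lambda>b. (Poly_Mapping.lookup f a * Poly_Mapping.lookup g b when (a, b) = (m, m'))) =
          (\<lambda>b. if b = m' then (Poly_Mapping.lookup f a * Poly_Mapping.lookup g m' when a = m) else 0)"
      by (auto simp: when_def fun_eq_iff)
    then show "(\<Sum>b\<in>Poly_Mapping.keys g. (Poly_Mapping.lookup f a * Poly_Mapping.lookup g b when (a, b) = (m, m'))) =
          (Poly_Mapping.lookup f a * Poly_Mapping.lookup g m' when a = m)"
      using m'(1) by (simp only: sum.delta finite_keys if_True)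
  qed
  also have "\<dots> = Poly_Mapping.lookup f m * Poly_Mapping.lookup g m'"
  proof -
    have "(\<lambda>a. (Poly_Mapping.lookup f a * Poly_Mapping.lookup g m' when a = m)) =
          (\<lambda>a. if a = m then Poly_Mapping.lookup f m * Poly_Mapping.lookup g m' else 0)"
      by (auto simp: when_def fun_eq_iff)
    then show ?thesis using m(1) by (simp only: sum.delta finite_keys if_True)
  qed
  finally show "Poly_Mapping.lookup (f * g) (m + m') = Poly_Mapping.lookup f m * Poly_Mapping.lookup g m'" .
  fix k assume "k \<in> Poly_Mapping.keys (f * g)"
  then obtain a b where "k = a + b" "a \<in> Poly_Mapping.keys f" "b \<in> Poly_Mapping.keys g"
    using keys_mult by blast
  then show "k = m + m' \<or> lt k (m + m')" using key by blast
qed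



definition good_ord :: "('k \<Rightarrow> 'k \<Rightarrow> bool) \<Rightarrow> ('k::plus) set \<Rightarrow> bool" where
  "good_ord lt K \<longleftrightarrow> (\<forall>x y z. lt x y \<longrightarrow> lt y z \<longrightarrow> lt x z) \<and> (\<forall>x. \<not> lt x x) \<and>
     (\<forall>x y. x \<noteq> y \<longrightarrow> lt x y \<or> lt y x) \<and>
     (\<forall>x\<in>K. \<forall>y\<in>K. \<forall>z\<in>K. lt x y \<longrightarrow> lt (x + z) (y + z))"

lemma good_ord_rev:
  assumes "good_ord lt K" shows "good_ord (\<lambda>x y. lt y x) K"
proof -
  have t: "\<And>x y z. lt x y \<Longrightarrow> lt y z \<Longrightarrow> lt x z" and i: "\<And>x. \<not> lt x x"
    and tot: "\<And>x y. x \<noteq> y \<Longrightarrow> lt x y \<or> lt y x"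
    and c: "\<And>x y z. x\<in>K \<Longrightarrow> y\<in>K \<Longrightarrow> z\<in>K \<Longrightarrow> lt x y \<Longrightarrow> lt (x + z) (y + z)"
    using assms(1) unfolding good_ord_def by blast+
  show ?thesis unfolding good_ord_def
  proof (intro conjI allI impI ballI)
    fix x y z assume "lt y x" "lt z y" then show "lt z x" using t by blast
  next
    fix x show "\<not> lt x x" by (rule i)
  next
    fix x y :: 'a assume "x \<noteq> y" then show "lt y x \<or> lt x y" using tot by blast
  next
    fix x y z assume "x \<in> K" "y \<in> K" "z \<in> K" "lt y x" then show "lt (y + z) (x + z)" using c by blast
  qed
qed

lemma good_ord_lex:
  fixes lv :: "'k::plus \<Rightarrow> real"
  assumes "good_ord lt K"
    and lvm: "\<And>x y. x \<in> K \<Longrightarrow> y \<in> K \<Longrightarrow> lv (x + y) = lv x * lv y"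
    and lvp: "\<And>x. x \<in> K \<Longrightarrow> 0 < lv x"
  shows "good_ord (\<lambda>x y. lv x < lv y \<or> (lv x = lv y \<and> lt x y)) K"
proof -
  have t: "\<And>x y z. lt x y \<Longrightarrow> lt y z \<Longrightarrow> lt x z" and i: "\<And>x. \<not> lt x x"
    and tot: "\<And>x y. x \<noteq> y \<Longrightarrow> lt x y \<or> lt y x"
    and c: "\<And>x y z. x\<in>K \<Longrightarrow> y\<in>K \<Longrightarrow> z\<in>K \<Longrightarrow> lt x y \<Longrightarrow> lt (x + z) (y + z)"
    using assms(1) unfolding good_ord_def by blast+
  show ?thesis unfolding good_ord_def
  proof (intro conjI allI impI ballI)
    fix x y z
    assume "lv x < lv y \<or> lv x = lv y \<and> lt x y" "lv y < lv z \<or> lv y = lv z \<and> lt y z"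
    then show "lv x < lv z \<or> lv x = lv z \<and> lt x z" by (elim disjE conjE) (auto intro: t)
  next
    fix x show "\<not> (lv x < lv x \<or> lv x = lv x \<and> lt x x)" using i by simp
  next
    fix x y :: 'k assume "x \<noteq> y"
    then show "(lv x < lv y \<or> lv x = lv y \<and> lt x y) \<or> (lv y < lv x \<or> lv y = lv x \<and> lt y x)"
      using tot[OF \<open>x \<noteq> y\<close>] less_linear[of "lv x" "lv y"] by auto
  next
    fix x y z assume K: "x \<in> K" "y \<in> K" "z \<in> K" and "lv x < lv y \<or> lv x = lv y \<and> lt x y"
    from this(4) show "lv (x + z) < lv (y + z) \<or> lv (x + z) = lv (y + z) \<and> lt (x + z) (y + z)"
    proof
      assume "lv x < lv y"
      then have "lv x * lv z < lv y * lv z" using lvp[OF K(3)] by (rule mult_strict_right_mono)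
      then show ?thesis using K by (simp add: lvm)
    next
      assume "lv x = lv y \<and> lt x y"
      then show ?thesis using c[OF K] K by (simp add: lvm)
    qed
  qed
qed

lemma greatest_exists:
  assumes "good_ord lt K" "finite S" "S \<noteq> {}"
  shows "\<exists>m\<in>S. \<forall>x\<in>S. x = m \<or> lt x m"
  using assms(2,3)
proof (induction S rule: finite_ne_induct)
  case (singleton x) then show ?case by auto
next
  case (insert x F)
  then obtain m where m: "m \<in> F" "\<forall>y\<in>F. y = m \<or> lt y m" by blast
  have t: "\<And>x y z. lt x y \<Longrightarrow> lt y z \<Longrightarrow> lt x z"
    and tot: "\<And>x y. x \<noteq> y \<Longrightarrow> lt x y \<or> lt y x"
    using assms(1) unfolding good_ord_def by blast+
  show ?case
  proof (cases "x = m \<or> lt x m")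
    case True
    have "\<forall>y\<in>insert x F. y = m \<or> lt y m" using m True by blast
    then show ?thesis using m(1) by blast
  next
    case False
    then have "lt m x" using tot by blast
    have "\<forall>y\<in>insert x F. y = x \<or> lt y x"
    proof
      fix y assume "y \<in> insert x F"
      then consider "y = x" | "y = m" | "lt y m" using m(2) by blast
      then show "y = x \<or> lt y x" using \<open>lt m x\<close> t by metis
    qed
    then show ?thesis by blast
  qed
qed

lemma prod_max:
  fixes f g :: "'k::comm_monoid_add \<Rightarrow>\<^sub>0 int"
  assumes go: "good_ord lt K" and kf: "Poly_Mapping.keys f \<subseteq> K" and kg: "Poly_Mapping.keys g \<subseteq> K"
    and nz: "f \<noteq> 0" "g \<noteq> 0"
  obtains m m' where "m \<in> Poly_Mapping.keys f" "\<And>x. x \<in> Poly_Mapping.keys f \<Longrightarrow> x = m \<or> lt x m"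
    "m' \<in> Poly_Mapping.keys g" "\<And>x. x \<in> Poly_Mapping.keys g \<Longrightarrow> x = m' \<or> lt x m'"
    "Poly_Mapping.lookup (f * g) (m + m') = Poly_Mapping.lookup f m * Poly_Mapping.lookup g m'"
    "m + m' \<in> Poly_Mapping.keys (f * g)"
    "\<And>k. k \<in> Poly_Mapping.keys (f * g) \<Longrightarrow> k = m + m' \<or> lt k (m + m')"
proof -
  obtain m where m: "m \<in> Poly_Mapping.keys f" "\<forall>x\<in>Poly_Mapping.keys f. x = m \<or> lt x m"
    using greatest_exists[OF go, of "Poly_Mapping.keys f"] nz by auto
  obtain m' where m': "m' \<in> Poly_Mapping.keys g" "\<forall>x\<in>Poly_Mapping.keys g. x = m' \<or> lt x m'"
    using greatest_exists[OF go, of "Poly_Mapping.keys g"] nz by auto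
  have t: "\<And>x y z. lt x y \<Longrightarrow> lt y z \<Longrightarrow> lt x z" and i: "\<And>x. \<not> lt x x"
    and c: "\<And>x y z. x\<in>K \<Longrightarrow> y\<in>K \<Longrightarrow> z\<in>K \<Longrightarrow> lt x y \<Longrightarrow> lt (x + z) (y + z)"
    using go unfolding good_ord_def by blast+
  have l: "Poly_Mapping.lookup (f * g) (m + m') = Poly_Mapping.lookup f m * Poly_Mapping.lookup g m'"
    by (rule ext_term(1)[of lt K f g m m']) (use t i c kf kg m m' in blast)+
  moreover have "m + m' \<in> Poly_Mapping.keys (f * g)"
    using l m(1) m'(1) by (simp add: in_keys_iff)
  moreover have "\<And>k. k \<in> Poly_Mapping.keys (f * g) \<Longrightarrow> k = m + m' \<or> lt k (m + m')"
    by (rule ext_term(2)[of lt K f g m m']) (use t i c kf kg m m' in blast)+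
  ultimately show ?thesis using that m m' by blast
qed



lemma keys_two:
  assumes "k1 \<noteq> k2"
  shows "Poly_Mapping.keys (Poly_Mapping.single k1 (1::int) + Poly_Mapping.single k2 1) = {k1, k2}"
    and "Poly_Mapping.lookup (Poly_Mapping.single k1 (1::int) + Poly_Mapping.single k2 1) k1 = 1"
  using assms by (auto simp: in_keys_iff lookup_add lookup_single when_def split: if_splits)

lemma keys_two_sub:
  "Poly_Mapping.keys (Poly_Mapping.single k1 (1::int) + Poly_Mapping.single k2 1) \<subseteq> {k1, k2}"
  by (auto simp: in_keys_iff lookup_add lookup_single when_def split: if_splits)

lemma two_nz: "Poly_Mapping.single k1 (1::int) + Poly_Mapping.single k2 1 \<noteq> 0"
proof
  assume "Poly_Mapping.single k1 (1::int) + Poly_Mapping.single k2 1 = 0"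
  then have "Poly_Mapping.lookup (Poly_Mapping.single k1 (1::int) + Poly_Mapping.single k2 1) k1 = 0" by simp
  then show False by (auto simp: lookup_add lookup_single when_def split: if_splits)
qed

lemma main_alg:
  fixes d e e' :: "'k::comm_monoid_add \<Rightarrow>\<^sub>0 int" and lv :: "'k \<Rightarrow> real"
  assumes go: "good_ord lt K"
    and lvm: "\<And>x y. x \<in> K \<Longrightarrow> y \<in> K \<Longrightarrow> lv (x + y) = lv x * lv y"
    and lvp: "\<And>x. x \<in> K \<Longrightarrow> 0 < lv x"
    and kd: "Poly_Mapping.keys d \<subseteq> K" and ke: "Poly_Mapping.keys e \<subseteq> K" and ke': "Poly_Mapping.keys e' \<subseteq> K"
    and Pi: "d * e = Poly_Mapping.single k1 1 + Poly_Mapping.single k2 1" and lvk: "lv k2 < lv k1"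
    and Pj: "d * e' = Poly_Mapping.single k1' 1 + Poly_Mapping.single k2' 1" and lvk': "lv k1' = lv k2'"
  obtains x c F1 F2 where "d = Poly_Mapping.single x c" "c = 1 \<or> c = -1" "x \<in> Poly_Mapping.keys d"
    "F1 \<in> Poly_Mapping.keys e" "k1 = x + F1" "F2 \<in> Poly_Mapping.keys e" "k2 = x + F2"
proof -
  define O1 where "O1 = (\<lambda>x y. lv x < lv y \<or> (lv x = lv y \<and> lt x y))"
  define O2 where "O2 = (\<lambda>x y. lv x < lv y \<or> (lv x = lv y \<and> lt y x))"
  have g1: "good_ord O1 K" unfolding O1_def by (rule good_ord_lex[OF go lvm lvp])
  have g2: "good_ord O2 K" unfolding O2_def by (rule good_ord_lex[OF good_ord_rev[OF go] lvm lvp])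
  have g1r: "good_ord (\<lambda>x y. O1 y x) K" by (rule good_ord_rev[OF g1])
  have ti: "\<And>x y z. lt x y \<Longrightarrow> lt y z \<Longrightarrow> lt x z" and ii: "\<And>x. \<not> lt x x"
    and ci: "\<And>x y z. x\<in>K \<Longrightarrow> y\<in>K \<Longrightarrow> z\<in>K \<Longrightarrow> lt x y \<Longrightarrow> lt (x + z) (y + z)"
    using go unfolding good_ord_def by blast+
  have k12: "k1 \<noteq> k2" using lvk by auto
  have kPi: "Poly_Mapping.keys (d * e) = {k1, k2}" using keys_two(1)[OF k12] Pi by simp
  have lPi: "Poly_Mapping.lookup (d * e) k1 = 1" using keys_two(2)[OF k12] Pi by simp
  have kPj: "Poly_Mapping.keys (d * e') \<subseteq> {k1', k2'}" using keys_two_sub Pj by metis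
  have "d * e \<noteq> 0" using Pi two_nz by metis
  then have dnz: "d \<noteq> 0" and enz: "e \<noteq> 0" by auto
  have "d * e' \<noteq> 0" using Pj two_nz by metis
  then have e'nz: "e' \<noteq> 0" by auto
  obtain M M' where M: "M \<in> Poly_Mapping.keys d" "\<And>x. x \<in> Poly_Mapping.keys d \<Longrightarrow> x = M \<or> O1 x M"
    "M' \<in> Poly_Mapping.keys e'" "\<And>x. x \<in> Poly_Mapping.keys e' \<Longrightarrow> x = M' \<or> O1 x M'"
    "M + M' \<in> Poly_Mapping.keys (d * e')"
    by (rule prod_max[OF g1 kd ke' dnz e'nz]) blast
  obtain m m' where m: "m \<in> Poly_Mapping.keys d" "\<And>x. x \<in> Poly_Mapping.keys d \<Longrightarrow> x = m \<or> O1 m x"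
    "m' \<in> Poly_Mapping.keys e'" "\<And>x. x \<in> Poly_Mapping.keys e' \<Longrightarrow> x = m' \<or> O1 m' x"
    "m + m' \<in> Poly_Mapping.keys (d * e')"
    by (rule prod_max[OF g1r kd ke' dnz e'nz]) blast
  have inK: "M \<in> K" "M' \<in> K" "m \<in> K" "m' \<in> K" using M m kd ke' by auto
  have lv1: "lv M * lv M' = lv k1'" using M(5) kPj lvk' lvm[OF inK(1,2)] by auto
  have lv2: "lv m * lv m' = lv k1'" using m(5) kPj lvk' lvm[OF inK(3,4)] by auto
  have leM: "\<And>x. x \<in> Poly_Mapping.keys d \<Longrightarrow> lv x \<le> lv M" using M(2) unfolding O1_def by force
  have gem: "\<And>x. x \<in> Poly_Mapping.keys d \<Longrightarrow> lv m \<le> lv x" using m(2) unfolding O1_def by force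
  have "lv m' \<le> lv M'" using M(4)[OF m(3)] unfolding O1_def by force
  have "lv m = lv M"
  proof (rule ccontr)
    assume "lv m \<noteq> lv M"
    then have "lv m < lv M" using gem[OF M(1)] by simp
    then have "lv m * lv m' < lv M * lv m'" using lvp[OF inK(4)] by (rule mult_strict_right_mono)
    also have "\<dots> \<le> lv M * lv M'" using \<open>lv m' \<le> lv M'\<close> lvp[OF inK(1)] by simp
    finally show False using lv1 lv2 by simp
  qed
  then have const: "\<And>x. x \<in> Poly_Mapping.keys d \<Longrightarrow> lv x = lv M" using leM gem by force
  obtain X1 E1 where X1: "X1 \<in> Poly_Mapping.keys d" "\<And>x. x \<in> Poly_Mapping.keys d \<Longrightarrow> x = X1 \<or> O1 x X1"
    "E1 \<in> Poly_Mapping.keys e" "\<And>x. x \<in> Poly_Mapping.keys e \<Longrightarrow> x = E1 \<or> O1 x E1"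
    "Poly_Mapping.lookup (d * e) (X1 + E1) = Poly_Mapping.lookup d X1 * Poly_Mapping.lookup e E1"
    "X1 + E1 \<in> Poly_Mapping.keys (d * e)"
    "\<And>k. k \<in> Poly_Mapping.keys (d * e) \<Longrightarrow> k = X1 + E1 \<or> O1 k (X1 + E1)"
    by (rule prod_max[OF g1 kd ke dnz enz]) blast
  obtain X2 E2 where X2: "X2 \<in> Poly_Mapping.keys d" "\<And>x. x \<in> Poly_Mapping.keys d \<Longrightarrow> x = X2 \<or> O2 x X2"
    "E2 \<in> Poly_Mapping.keys e" "\<And>x. x \<in> Poly_Mapping.keys e \<Longrightarrow> x = E2 \<or> O2 x E2"
    "X2 + E2 \<in> Poly_Mapping.keys (d * e)"
    "\<And>k. k \<in> Poly_Mapping.keys (d * e) \<Longrightarrow> k = X2 + E2 \<or> O2 k (X2 + E2)"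
    by (rule prod_max[OF g2 kd ke dnz enz]) blast
  obtain Y F where Y: "Y \<in> Poly_Mapping.keys d" 
    "F \<in> Poly_Mapping.keys e" 
    "Y + F \<in> Poly_Mapping.keys (d * e)"
    "\<And>k. k \<in> Poly_Mapping.keys (d * e) \<Longrightarrow> k = Y + F \<or> O1 (Y + F) k"
    by (rule prod_max[OF g1r kd ke dnz enz]) blast
  have k1in: "k1 \<in> Poly_Mapping.keys (d * e)" and k2in: "k2 \<in> Poly_Mapping.keys (d * e)" using kPi by auto
  have XE1: "X1 + E1 = k1"
  proof (rule ccontr)
    assume "X1 + E1 \<noteq> k1"
    then have "X1 + E1 = k2" using X1(6) kPi by auto
    then show False using X1(7)[OF k1in] k12 lvk unfolding O1_def by auto
  qed
  have XE2: "X2 + E2 = k1"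
  proof (rule ccontr)
    assume "X2 + E2 \<noteq> k1"
    then have "X2 + E2 = k2" using X2(5) kPi by auto
    then show False using X2(6)[OF k1in] k12 lvk unfolding O2_def by auto
  qed
  have YF: "Y + F = k2"
  proof (rule ccontr)
    assume "Y + F \<noteq> k2"
    then have "Y + F = k1" using Y(3) kPi by auto
    then show False using Y(4)[OF k2in] k12 lvk unfolding O1_def by auto
  qed
  have inK2: "X1 \<in> K" "X2 \<in> K" "E1 \<in> K" "E2 \<in> K" using X1 X2 kd ke by auto
  have lvX: "lv X1 = lv M" "lv X2 = lv M" using const X1(1) X2(1) by auto
  have "lv X1 * lv E1 = lv X2 * lv E2" using XE1 XE2 lvm inK2 by metis
  then have lvE: "lv E1 = lv E2" using lvX lvp[OF inK2(1)] by simp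
  have a1: "X2 = X1 \<or> lt X2 X1" using X1(2)[OF X2(1)] lvX unfolding O1_def by auto
  have a2: "E2 = E1 \<or> lt E2 E1" using X1(4)[OF X2(3)] lvE unfolding O1_def by auto
  have X12: "X1 = X2"
  proof (rule ccontr)
    assume "X1 \<noteq> X2"
    then have "lt X2 X1" using a1 by auto
    then have b1: "lt (X2 + E2) (X1 + E2)" using ci inK2 by blast
    have "X1 + E2 = X1 + E1 \<or> lt (X1 + E2) (X1 + E1)"
    proof (cases "E2 = E1")
      case False
      then have "lt E2 E1" using a2 by auto
      then have "lt (E2 + X1) (E1 + X1)" using ci inK2 by blast
      then show ?thesis by (simp add: add.commute)
    qed simp
    then have "lt (X2 + E2) (X1 + E1)" using b1 ti by metis
    then show False using XE1 XE2 ii by simp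
  qed
  have single_key: "Poly_Mapping.keys d = {X1}"
  proof
    show "{X1} \<subseteq> Poly_Mapping.keys d" using X1(1) by simp
    show "Poly_Mapping.keys d \<subseteq> {X1}"
    proof
      fix x assume x: "x \<in> Poly_Mapping.keys d"
      have "x = X1 \<or> lt x X1" using X1(2)[OF x] const[OF x] lvX unfolding O1_def by auto
      moreover have "x = X1 \<or> lt X1 x" using X2(2)[OF x] const[OF x] lvX X12 unfolding O2_def by auto
      ultimately show "x \<in> {X1}" using ti ii by blast
    qed
  qed
  have dsing: "d = Poly_Mapping.single X1 (Poly_Mapping.lookup d X1)"
    using pm_expand[of d] single_key by simp
  have "Poly_Mapping.lookup d X1 * Poly_Mapping.lookup e E1 = 1" using X1(5) XE1 lPi by simp
  then have c: "Poly_Mapping.lookup d X1 = 1 \<or> Poly_Mapping.lookup d X1 = -1" by (auto simp: zmult_eq_1_iff)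
  have "Y = X1" using Y(1) single_key by auto
  show ?thesis
    by (rule that[OF dsing c X1(1) X1(3) XE1[symmetric] Y(2)]) (use YF \<open>Y = X1\<close> in simp)
qed



lemma pm_pos_iff:
  fixes p :: "'k::linorder \<Rightarrow>\<^sub>0 'v::linordered_idom"
  assumes "p \<noteq> 0"
  shows "0 < p \<longleftrightarrow> 0 < Poly_Mapping.lookup p (Min (Poly_Mapping.keys p))"
proof -
  have ne: "Poly_Mapping.keys p \<noteq> {}" using assms by simp
  define m where "m = Min (Poly_Mapping.keys p)"
  have m: "m \<in> Poly_Mapping.keys p" "\<And>x. x \<in> Poly_Mapping.keys p \<Longrightarrow> m \<le> x"
    using ne by (auto simp: m_def)
  have "0 < p \<longleftrightarrow> (\<exists>k. 0 < Poly_Mapping.lookup p k \<and> (\<forall>k'<k. Poly_Mapping.lookup p k' = 0))"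
    unfolding less_poly_mapping.rep_eq less_fun_def lookup_zero by (metis (no_types))
  also have "\<dots> \<longleftrightarrow> 0 < Poly_Mapping.lookup p m"
  proof
    assume "\<exists>k. 0 < Poly_Mapping.lookup p k \<and> (\<forall>k'<k. Poly_Mapping.lookup p k' = 0)"
    then obtain k where k: "0 < Poly_Mapping.lookup p k" "\<forall>k'<k. Poly_Mapping.lookup p k' = 0" by blast
    then have "k \<in> Poly_Mapping.keys p" by (simp add: in_keys_iff)
    then have "m \<le> k" using m by blast
    moreover have "\<not> m < k" using k(2) m(1) by (auto simp: in_keys_iff)
    ultimately have "m = k" by simp
    then show "0 < Poly_Mapping.lookup p m" using k by simp
  next
    assume "0 < Poly_Mapping.lookup p m"
    moreover have "\<forall>k'<m. Poly_Mapping.lookup p k' = 0"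
      using m(2) by (meson in_keys_iff leD)
    ultimately show "\<exists>k. 0 < Poly_Mapping.lookup p k \<and> (\<forall>k'<k. Poly_Mapping.lookup p k' = 0)" by blast
  qed
  finally show ?thesis by (simp add: m_def)
qed

lemma pm_mult_pos:
  fixes p q :: "'k::{linorder, ordered_cancel_comm_monoid_add} \<Rightarrow>\<^sub>0 'v::linordered_idom"
  assumes p: "0 < p" and q: "0 < q"
  shows "0 < p * q"
proof -
  have pnz: "p \<noteq> 0" and qnz: "q \<noteq> 0" using p q by auto
  define m where "m = Min (Poly_Mapping.keys p)"
  define m' where "m' = Min (Poly_Mapping.keys q)"
  have m: "m \<in> Poly_Mapping.keys p" using pnz unfolding m_def by simp
  have m2: "\<And>x. x \<in> Poly_Mapping.keys p \<Longrightarrow> x = m \<or> m < x"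
    using Min_le[OF finite_keys] unfolding m_def by (metis le_neq_trans)
  have m': "m' \<in> Poly_Mapping.keys q" using qnz unfolding m'_def by simp
  have m'2: "\<And>x. x \<in> Poly_Mapping.keys q \<Longrightarrow> x = m' \<or> m' < x"
    using Min_le[OF finite_keys] unfolding m'_def by (metis le_neq_trans)
  have t: "\<And>x y z::'k. y < x \<Longrightarrow> z < y \<Longrightarrow> z < x" by auto
  have i: "\<And>x::'k. \<not> x < x" by auto
  have c: "\<And>x y z::'k. x \<in> UNIV \<Longrightarrow> y \<in> UNIV \<Longrightarrow> z \<in> UNIV \<Longrightarrow> y < x \<Longrightarrow> y + z < x + z"
    by (simp add: add_strict_right_mono)
  have l: "Poly_Mapping.lookup (p * q) (m + m') = Poly_Mapping.lookup p m * Poly_Mapping.lookup q m'"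
    by (rule ext_term(1)[of "\<lambda>a b. b < a" UNIV p q m m']) (use t i c m m' m2 m'2 in auto)
  have ks: "\<And>k. k \<in> Poly_Mapping.keys (p * q) \<Longrightarrow> k = m + m' \<or> m + m' < k"
    by (rule ext_term(2)[of "\<lambda>a b. b < a" UNIV p q m m']) (use t i c m m' m2 m'2 in auto)
  have pm: "0 < Poly_Mapping.lookup p m" using pnz p pm_pos_iff m_def by blast
  have qm: "0 < Poly_Mapping.lookup q m'" using qnz q pm_pos_iff m'_def by blast
  have pos: "0 < Poly_Mapping.lookup (p * q) (m + m')" using l pm qm by simp
  then have inn: "m + m' \<in> Poly_Mapping.keys (p * q)" by (simp add: in_keys_iff)
  then have pqnz: "p * q \<noteq> 0" by auto
  have "Min (Poly_Mapping.keys (p * q)) = m + m'"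
  proof (rule Min_eqI)
    show "finite (Poly_Mapping.keys (p * q))" by simp
    show "m + m' \<in> Poly_Mapping.keys (p * q)" by (rule inn)
    fix y assume "y \<in> Poly_Mapping.keys (p * q)"
    then show "m + m' \<le> y" using ks by force
  qed
  then show ?thesis using pm_pos_iff[OF pqnz] pos by simp
qed

lemma mpq_sq_pos:
  fixes q :: mpq
  assumes "q \<noteq> 0" shows "0 < q * q"
proof (cases "0 < q")
  case True then show ?thesis using pm_mult_pos by blast
next
  case False
  then have "0 < - q" using assms by (simp add: neg_0_less_iff_less) 
  then have "0 < (- q) * (- q)" using pm_mult_pos by blast
  then show ?thesis by simp
qed

definition posr :: "rf \<Rightarrow> bool" where
  "posr x \<longleftrightarrow> (\<exists>p q. q \<noteq> 0 \<and> x = Fract p q \<and> 0 < p * q)"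

lemma posr_add: assumes "posr x" "posr y" shows "posr (x + y)"
proof -
  obtain p q where pq: "q \<noteq> 0" "x = Fract p q" "0 < p * q" using assms(1) posr_def by blast
  obtain p' q' where pq': "q' \<noteq> 0" "y = Fract p' q'" "0 < p' * q'" using assms(2) posr_def by blast
  have "x + y = Fract (p * q' + p' * q) (q * q')" by (simp only: pq(2) pq'(2) add_fract[OF pq(1) pq'(1)])
  moreover have "q * q' \<noteq> 0" using pq pq' by simp
  moreover have "0 < (p * q' + p' * q) * (q * q')"
  proof -
    have "(p * q' + p' * q) * (q * q') = (p * q) * (q' * q') + (p' * q') * (q * q)"
      unfolding distrib_right by (simp only: mult_ac)
    moreover have "0 < (p * q) * (q' * q')" using pm_mult_pos pq(3) mpq_sq_pos[OF pq'(1)] by blast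
    moreover have "0 < (p' * q') * (q * q)" using pm_mult_pos pq'(3) mpq_sq_pos[OF pq(1)] by blast
    ultimately show ?thesis by (simp add: add_pos_pos)
  qed
  ultimately show ?thesis unfolding posr_def by blast
qed

lemma posr_mult: assumes "posr x" "posr y" shows "posr (x * y)"
proof -
  obtain p q where pq: "q \<noteq> 0" "x = Fract p q" "0 < p * q" using assms(1) posr_def by blast
  obtain p' q' where pq': "q' \<noteq> 0" "y = Fract p' q'" "0 < p' * q'" using assms(2) posr_def by blast
  have "x * y = Fract (p * p') (q * q')" using pq pq' by simp
  moreover have "q * q' \<noteq> 0" using pq pq' by simp
  moreover have "0 < (p * p') * (q * q')"
  proof -
    have "(p * p') * (q * q') = (p * q) * (p' * q')" by (simp only: mult_ac)
    then show ?thesis using pm_mult_pos pq(3) pq'(3) by metis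
  qed
  ultimately show ?thesis unfolding posr_def by blast
qed

lemma not_posr0: "\<not> posr 0"
proof
  assume "posr 0"
  then obtain p q where pq: "q \<noteq> 0" "(0::rf) = Fract p q" "0 < p * q" using posr_def by blast
  then have "Fract p q = Fract 0 1" by (simp add: Zero_fract_def)
  then have "p = 0" using pq(1) by (simp add: eq_fract)
  then show False using pq(3) by simp
qed

lemma posr_tot: assumes "x \<noteq> 0" shows "posr x \<or> posr (- x)"
proof -
  obtain p q where pq: "x = Fract p q" "q \<noteq> 0" by (cases x) auto
  have "p \<noteq> 0" using pq assms by (auto simp: Zero_fract_def eq_fract)
  then have "p * q \<noteq> 0" using pq by simp
  then consider "0 < p * q" | "p * q < 0" by (meson linorder_neqE)
  then show ?thesis
  proof cases
    case 1 then show ?thesis using pq unfolding posr_def by blast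
  next
    case 2
    then have "0 < (- p) * q" by (simp add: neg_0_less_iff_less)
    moreover have "- x = Fract (- p) q" using pq by simp
    ultimately show ?thesis using pq unfolding posr_def by blast
  qed
qed

lemma Nats_nonneg_rat: "(x::rat) \<in> \<nat> \<Longrightarrow> 0 \<le> x"
  by (auto elim: Nats_cases)

lemma nnpoly_pos: assumes "nnpoly n p" shows "0 < p"
proof -
  have nz: "p \<noteq> 0" using assms by (simp add: nnpoly_def)
  then have "Min (Poly_Mapping.keys p) \<in> Poly_Mapping.keys p" by simp
  then have "Poly_Mapping.lookup p (Min (Poly_Mapping.keys p)) \<noteq> 0" by (simp add: in_keys_iff)
  moreover have "0 \<le> Poly_Mapping.lookup p (Min (Poly_Mapping.keys p))"
    using assms Nats_nonneg_rat by (simp add: nnpoly_def)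
  ultimately show ?thesis using pm_pos_iff[OF nz] by simp
qed

lemma nnpoly_nz: "nnpoly n p \<Longrightarrow> p \<noteq> 0" by (simp add: nnpoly_def)

lemma Qsf_posr: assumes "x \<in> Qsf n" shows "posr x"
proof -
  obtain p q where "nnpoly n p" "nnpoly n q" "x = Fract p q" using assms by (auto simp: Qsf_def)
  then show ?thesis unfolding posr_def using pm_mult_pos nnpoly_pos nnpoly_nz by blast
qed



fun ltT :: "rf mkey \<Rightarrow> rf mkey \<Rightarrow> bool" where
  "ltT (MK p a) (MK q b) \<longleftrightarrow> posr (q - p) \<or> (p = q \<and> a < b)"

definition KS :: "rf set \<Rightarrow> rf mkey set" where
  "KS P = {x. \<exists>p a. x = MK p a \<and> p \<in> P}"

lemma good_ltT:
  assumes "\<And>r. r \<in> P \<Longrightarrow> posr r"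
  shows "good_ord ltT (KS P)"
  unfolding good_ord_def
proof (intro conjI allI impI ballI)
  fix x y z assume "ltT x y" "ltT y z"
  then show "ltT x z"
  proof (cases x; cases y; cases z)
    fix p a q b r c assume xyz: "x = MK p a" "y = MK q b" "z = MK r c"
    have "r - p = (r - q) + (q - p)" by simp
    then have tr: "posr (q - p) \<Longrightarrow> posr (r - q) \<Longrightarrow> posr (r - p)" using posr_add by metis
    show ?thesis using \<open>ltT x y\<close> \<open>ltT y z\<close> xyz tr by auto
  qed
next
  fix x show "\<not> ltT x x" by (cases x) (simp add: not_posr0)
next
  fix x y :: "rf mkey" assume "x \<noteq> y"
  then show "ltT x y \<or> ltT y x"
  proof (cases x; cases y)
    fix p a q b assume xy: "x = MK p a" "y = MK q b"
    show ?thesis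
    proof (cases "p = q")
      case True then show ?thesis using xy \<open>x \<noteq> y\<close> by (auto simp: neq_iff)
    next
      case False
      then have "q - p \<noteq> 0" by simp
      then have "posr (q - p) \<or> posr (p - q)" using posr_tot by fastforce
      then show ?thesis using xy by auto
    qed
  qed
next
  fix x y z assume K: "x \<in> KS P" "y \<in> KS P" "z \<in> KS P" and lt: "ltT x y"
  obtain p a where x: "x = MK p a" using K(1) by (auto simp: KS_def)
  obtain q b where y: "y = MK q b" using K(2) by (auto simp: KS_def)
  obtain r c where z: "z = MK r c" "r \<in> P" using K(3) by (auto simp: KS_def)
  have pr: "posr r" using assms z by blast
  have "q * r - p * r = (q - p) * r" by (simp add: algebra_simps)
  then show "ltT (x + z) (y + z)"
    using lt x y z pr posr_mult by (auto simp: add_strict_right_mono)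
qed



definition mon :: "(nat \<Rightarrow> real) \<Rightarrow> (nat \<Rightarrow>\<^sub>0 nat) \<Rightarrow> real" where
  "mon a m = (\<Prod>l\<in>Poly_Mapping.keys m. a l ^ Poly_Mapping.lookup m l)"

definition ev :: "(nat \<Rightarrow> real) \<Rightarrow> mpq \<Rightarrow> real" where
  "ev a p = (\<Sum>m\<in>Poly_Mapping.keys p. real_of_rat (Poly_Mapping.lookup p m) * mon a m)"

lemma mon_sup:
  assumes "finite S" "Poly_Mapping.keys m \<subseteq> S"
  shows "mon a m = (\<Prod>l\<in>S. a l ^ Poly_Mapping.lookup m l)"
  unfolding mon_def by (rule prod.mono_neutral_left) (use assms in \<open>auto simp: in_keys_iff\<close>)

lemma mon_add: "mon a (m + m') = mon a m * mon a m'"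
proof -
  define S where "S = Poly_Mapping.keys m \<union> Poly_Mapping.keys m'"
  have f: "finite S" by (simp add: S_def)
  have "mon a (m + m') = (\<Prod>l\<in>S. a l ^ Poly_Mapping.lookup (m + m') l)"
    by (rule mon_sup[OF f]) (use keys_add[of m m'] in \<open>auto simp: S_def\<close>)
  also have "\<dots> = (\<Prod>l\<in>S. a l ^ Poly_Mapping.lookup m l) * (\<Prod>l\<in>S. a l ^ Poly_Mapping.lookup m' l)"
    by (simp add: lookup_add power_add prod.distrib)
  also have "\<dots> = mon a m * mon a m'"
    using mon_sup[OF f, of m a] mon_sup[OF f, of m' a] by (simp add: S_def)
  finally show ?thesis .
qed

lemma mon_zero [simp]: "mon a 0 = 1" by (simp add: mon_def)

lemma mon_pos: "(\<And>l. 0 < a l) \<Longrightarrow> 0 < mon a m"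
  unfolding mon_def by (rule prod_pos) simp

lemma ev_sup:
  assumes "finite S" "Poly_Mapping.keys p \<subseteq> S"
  shows "ev a p = (\<Sum>m\<in>S. real_of_rat (Poly_Mapping.lookup p m) * mon a m)"
  unfolding ev_def by (rule sum.mono_neutral_left) (use assms in \<open>auto simp: in_keys_iff\<close>)

lemma ev_add: "ev a (p + q) = ev a p + ev a q"
proof -
  define S where "S = Poly_Mapping.keys p \<union> Poly_Mapping.keys q"
  have f: "finite S" by (simp add: S_def)
  have "ev a (p + q) = (\<Sum>m\<in>S. real_of_rat (Poly_Mapping.lookup (p + q) m) * mon a m)"
    by (rule ev_sup[OF f]) (use keys_add[of p q] in \<open>auto simp: S_def\<close>)
  also have "\<dots> = (\<Sum>m\<in>S. real_of_rat (Poly_Mapping.lookup p m) * mon a m) +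
                  (\<Sum>m\<in>S. real_of_rat (Poly_Mapping.lookup q m) * mon a m)"
    by (simp add: lookup_add of_rat_add distrib_right sum.distrib)
  also have "\<dots> = ev a p + ev a q"
    using ev_sup[OF f, of p a] ev_sup[OF f, of q a] by (simp add: S_def)
  finally show ?thesis .
qed

lemma ev_zero [simp]: "ev a 0 = 0" by (simp add: ev_def)

lemma ev_single: "ev a (Poly_Mapping.single m c) = real_of_rat c * mon a m"
proof -
  have "ev a (Poly_Mapping.single m c) = (\<Sum>k\<in>{m}. real_of_rat (Poly_Mapping.lookup (Poly_Mapping.single m c) k) * mon a k)"
    by (rule ev_sup) auto
  then show ?thesis by simp
qed

lemma ev_sum: "ev a (\<Sum>i\<in>I. f i) = (\<Sum>i\<in>I. ev a (f i))"
  by (induction I rule: infinite_finite_induct) (simp_all add: ev_add)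

lemma ev_mult: "ev a (p * q) = ev a p * ev a q"
proof -
  have "ev a (p * q) = (\<Sum>x\<in>Poly_Mapping.keys p. \<Sum>y\<in>Poly_Mapping.keys q.
      real_of_rat (Poly_Mapping.lookup p x * Poly_Mapping.lookup q y) * mon a (x + y))"
    by (subst pm_mult_expand) (simp add: ev_sum ev_single)
  also have "\<dots> = (\<Sum>x\<in>Poly_Mapping.keys p. \<Sum>y\<in>Poly_Mapping.keys q.
      (real_of_rat (Poly_Mapping.lookup p x) * mon a x) * (real_of_rat (Poly_Mapping.lookup q y) * mon a y))"
    by (simp add: of_rat_mult mon_add mult_ac)
  also have "\<dots> = ev a p * ev a q" unfolding ev_def by (simp only: sum_product)
  finally show ?thesis .
qed

lemma ev_one [simp]: "ev a 1 = 1"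
  using ev_single[of a 0 1] by simp

lemma Nats_sum': "(\<And>x. x \<in> A \<Longrightarrow> f x \<in> \<nat>) \<Longrightarrow> sum f A \<in> \<nat>"
  by (induction A rule: infinite_finite_induct) auto

lemma ev_pos:
  assumes a: "\<And>l. 0 < a l" and p: "nnpoly n p"
  shows "0 < ev a p"
  unfolding ev_def
proof (rule sum_pos)
  show "finite (Poly_Mapping.keys p)" by simp
  show "Poly_Mapping.keys p \<noteq> {}" using p by (simp add: nnpoly_def)
  fix m assume m: "m \<in> Poly_Mapping.keys p"
  have "0 \<le> Poly_Mapping.lookup p m" using p Nats_nonneg_rat by (simp add: nnpoly_def)
  moreover have "Poly_Mapping.lookup p m \<noteq> 0" using m by (simp add: in_keys_iff)
  ultimately have "0 < real_of_rat (Poly_Mapping.lookup p m)" by simp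
  then show "0 < real_of_rat (Poly_Mapping.lookup p m) * mon a m" using mon_pos[OF a] by simp
qed

lemma keys_add_sub: "Poly_Mapping.keys ((m::nat \<Rightarrow>\<^sub>0 nat) + m') \<subseteq> Poly_Mapping.keys m \<union> Poly_Mapping.keys m'"
  by (rule keys_add)

lemma nnpoly_mult: assumes p: "nnpoly n p" and q: "nnpoly n q" shows "nnpoly n (p * q)"
  unfolding nnpoly_def
proof (intro conjI allI impI)
  show "p * q \<noteq> 0" using p q by (simp add: nnpoly_def)
  fix m
  show "Poly_Mapping.lookup (p * q) m \<in> \<nat>"
    unfolding lookup_mult_expand
    by (intro Nats_sum') (use p q in \<open>auto simp: when_def nnpoly_def\<close>)
next
  fix m :: "nat \<Rightarrow>\<^sub>0 nat" assume "m \<in> Poly_Mapping.keys (p * q)"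
  then obtain x y where "m = x + y" "x \<in> Poly_Mapping.keys p" "y \<in> Poly_Mapping.keys q"
    using keys_mult by blast
  then show "Poly_Mapping.keys m \<subseteq> {..<n}" using p q keys_add_sub[of x y] by (force simp: nnpoly_def)
qed

lemma nnpoly_add: assumes p: "nnpoly n p" and q: "nnpoly n q" shows "nnpoly n (p + q)"
  unfolding nnpoly_def
proof (intro conjI allI impI)
  have "Poly_Mapping.keys p \<noteq> {}" using p by (simp add: nnpoly_def)
  then obtain m where m: "m \<in> Poly_Mapping.keys p" by blast
  have "0 \<le> Poly_Mapping.lookup p m" "0 \<le> Poly_Mapping.lookup q m"
    using p q Nats_nonneg_rat by (auto simp: nnpoly_def)
  moreover have "Poly_Mapping.lookup p m \<noteq> 0" using m by (simp add: in_keys_iff)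
  ultimately have "Poly_Mapping.lookup (p + q) m \<noteq> 0" by (simp add: lookup_add)
  then show "p + q \<noteq> 0" by auto
  fix m
  show "Poly_Mapping.lookup (p + q) m \<in> \<nat>" using p q by (simp add: lookup_add nnpoly_def)
next
  fix m assume "m \<in> Poly_Mapping.keys (p + q)"
  then have "m \<in> Poly_Mapping.keys p \<or> m \<in> Poly_Mapping.keys q" using keys_add[of p q] by blast
  then show "Poly_Mapping.keys m \<subseteq> {..<n}" using p q unfolding nnpoly_def by blast
qed

lemma nnpoly_one: "nnpoly n 1"
  by (auto simp: nnpoly_def lookup_one when_def)

lemma Qsf_E:
  assumes "x \<in> Qsf n"
  obtains p q where "nnpoly n p" "nnpoly n q" "x = Fract p q"
  using assms by (auto simp: Qsf_def)

lemma Qsf_I: "nnpoly n p \<Longrightarrow> nnpoly n q \<Longrightarrow> Fract p q \<in> Qsf n"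
  by (auto simp: Qsf_def)

lemma Qsf_mult: "x \<in> Qsf n \<Longrightarrow> y \<in> Qsf n \<Longrightarrow> x * y \<in> Qsf n"
  by (elim Qsf_E) (simp add: Qsf_I nnpoly_mult)

lemma Qsf_add: "x \<in> Qsf n \<Longrightarrow> y \<in> Qsf n \<Longrightarrow> x + y \<in> Qsf n"
  by (elim Qsf_E) (simp add: Qsf_I nnpoly_mult nnpoly_add nnpoly_nz)

lemma Qsf_inverse: "x \<in> Qsf n \<Longrightarrow> inverse x \<in> Qsf n"
  by (elim Qsf_E) (simp add: Qsf_I)

lemma Qsf_one: "1 \<in> Qsf n"
  by (simp add: One_fract_def Qsf_I nnpoly_one)

lemma Qsf_divide: "x \<in> Qsf n \<Longrightarrow> y \<in> Qsf n \<Longrightarrow> x / y \<in> Qsf n"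
  by (simp add: divide_inverse Qsf_mult Qsf_inverse)

lemma Qsf_power: "x \<in> Qsf n \<Longrightarrow> x ^ k \<in> Qsf n"
  by (induction k) (simp_all add: Qsf_one Qsf_mult)

lemma Qsf_powi: "x \<in> Qsf n \<Longrightarrow> x powi k \<in> Qsf n"
  by (simp add: power_int_def Qsf_power Qsf_inverse)

definition Lv :: "nat \<Rightarrow> (nat \<Rightarrow> real) \<Rightarrow> rf \<Rightarrow> real" where
  "Lv n a x = (SOME r. \<exists>p q. nnpoly n p \<and> nnpoly n q \<and> x = Fract p q \<and> r = ev a p / ev a q)"

lemma Lv_Fract:
  assumes a: "\<And>l. 0 < a l" and p: "nnpoly n p" and q: "nnpoly n q"
  shows "Lv n a (Fract p q) = ev a p / ev a q"
proof -
  have "\<exists>r. \<exists>p' q'. nnpoly n p' \<and> nnpoly n q' \<and> Fract p q = Fract p' q' \<and> r = ev a p' / ev a q'"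
    using p q by blast
  then have "\<exists>p' q'. nnpoly n p' \<and> nnpoly n q' \<and> Fract p q = Fract p' q' \<and> Lv n a (Fract p q) = ev a p' / ev a q'"
    unfolding Lv_def by (rule someI_ex)
  then obtain p' q' where pq: "nnpoly n p'" "nnpoly n q'" "Fract p q = Fract p' q'"
      "Lv n a (Fract p q) = ev a p' / ev a q'" by blast
  have "p * q' = p' * q" using pq(3) nnpoly_nz[OF q] nnpoly_nz[OF pq(2)] by (simp add: eq_fract)
  then have "ev a p * ev a q' = ev a p' * ev a q" by (metis ev_mult)
  moreover have "0 < ev a q" "0 < ev a q'" using ev_pos[OF a] q pq(2) by auto
  ultimately show ?thesis using pq(4) by (simp add: frac_eq_eq)
qed

lemma Lv_pos: "(\<And>l. 0 < a l) \<Longrightarrow> x \<in> Qsf n \<Longrightarrow> 0 < Lv n a x"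
  by (elim Qsf_E) (simp add: Lv_Fract ev_pos)

lemma Lv_mult: "(\<And>l. 0 < a l) \<Longrightarrow> x \<in> Qsf n \<Longrightarrow> y \<in> Qsf n \<Longrightarrow> Lv n a (x * y) = Lv n a x * Lv n a y"
  by (elim Qsf_E) (simp add: Lv_Fract nnpoly_mult ev_mult)

lemma Lv_add: "(\<And>l. 0 < a l) \<Longrightarrow> x \<in> Qsf n \<Longrightarrow> y \<in> Qsf n \<Longrightarrow> Lv n a (x + y) = Lv n a x + Lv n a y"
proof (elim Qsf_E)
  fix p q p' q' assume a: "\<And>l. 0 < a l" and h: "nnpoly n p" "nnpoly n q" "x = Fract p q" "nnpoly n p'" "nnpoly n q'" "y = Fract p' q'"
  have "x + y = Fract (p * q' + p' * q) (q * q')" using h by (simp add: nnpoly_nz)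
  then have "Lv n a (x + y) = ev a (p * q' + p' * q) / ev a (q * q')"
    using h by (simp add: Lv_Fract[OF a] nnpoly_mult nnpoly_add)
  moreover have "0 < ev a q" "0 < ev a q'" using ev_pos[OF a] h by auto
  ultimately show ?thesis using h by (simp add: Lv_Fract[OF a] ev_add ev_mult field_simps)
qed

lemma Lv_inverse: "(\<And>l. 0 < a l) \<Longrightarrow> x \<in> Qsf n \<Longrightarrow> Lv n a (inverse x) = inverse (Lv n a x)"
  by (elim Qsf_E) (simp add: Lv_Fract)

lemma Lv_one: "(\<And>l. 0 < a l) \<Longrightarrow> Lv n a 1 = 1"
  by (simp add: One_fract_def Lv_Fract nnpoly_one del: Fract_of_nat_eq)

lemma Lv_divide: "(\<And>l. 0 < a l) \<Longrightarrow> x \<in> Qsf n \<Longrightarrow> y \<in> Qsf n \<Longrightarrow> Lv n a (x / y) = Lv n a x / Lv n a y"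
  by (simp add: divide_inverse Lv_mult Lv_inverse Qsf_inverse)

lemma Lv_power: "(\<And>l. 0 < a l) \<Longrightarrow> x \<in> Qsf n \<Longrightarrow> Lv n a (x ^ k) = Lv n a x ^ k"
  by (induction k) (simp_all add: Lv_one Lv_mult Qsf_power)

lemma Lv_powi: "(\<And>l. 0 < a l) \<Longrightarrow> x \<in> Qsf n \<Longrightarrow> Lv n a (x powi k) = Lv n a x powi k"
  by (simp add: power_int_def Lv_power Lv_inverse Qsf_inverse Qsf_power power_inverse)

lemma nnpoly_var: "l < n \<Longrightarrow> nnpoly n (Poly_Mapping.single (Poly_Mapping.single l 1) 1)"
  unfolding nnpoly_def
proof (intro conjI allI impI)
  show "Poly_Mapping.single (Poly_Mapping.single l 1) (1::rat) \<noteq> 0"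
    by (metis lookup_single_eq lookup_zero one_neq_zero)
qed (auto simp: lookup_single when_def)

lemma yvar_Qsf: "l < n \<Longrightarrow> yvar l \<in> Qsf n"
  unfolding yvar_def by (rule Qsf_I[OF nnpoly_var nnpoly_one])

lemma Lv_yvar: assumes a: "\<And>l. 0 < a l" and l: "l < n" shows "Lv n a (yvar l) = a l"
proof -
  have "Lv n a (yvar l) = ev a (Poly_Mapping.single (Poly_Mapping.single l 1) 1) / ev a 1"
    unfolding yvar_def by (rule Lv_Fract[OF a nnpoly_var[OF l] nnpoly_one])
  then show ?thesis by (simp add: ev_single mon_def)
qed



definition mutr :: "nat \<Rightarrow> (nat \<Rightarrow> real) \<Rightarrow> (nat \<Rightarrow> nat \<Rightarrow> int) \<Rightarrow> nat \<Rightarrow> real" where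
  "mutr k z B = (\<lambda>i. if i = k then inverse (z k)
                      else z i * (z k) powi (pos (B k i)) * (1 + z k) powi (- B k i))"

fun mutseqR :: "(nat \<Rightarrow> real) \<times> (nat \<Rightarrow> nat \<Rightarrow> int) \<Rightarrow> nat list
                  \<Rightarrow> (nat \<Rightarrow> real) \<times> (nat \<Rightarrow> nat \<Rightarrow> int)" where
  "mutseqR s [] = s"
| "mutseqR (z, B) (k # ks) = mutseqR (mutr k z B, mut_B k B) ks"

lemma transport:
  assumes a: "\<And>l. 0 < a l"
  shows "set ks \<subseteq> {..<n} \<Longrightarrow> (\<forall>i<n. y i \<in> Qsf n \<and> Lv n a (y i) = z i) \<Longrightarrow>
    snd (mut_seq (y, B) ks) = snd (mutseqR (z, B) ks) \<and>
    (\<forall>i<n. fst (mut_seq (y, B) ks) i \<in> Qsf n \<and> Lv n a (fst (mut_seq (y, B) ks) i) = fst (mutseqR (z, B) ks) i)"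
proof (induction ks arbitrary: y z B)
  case Nil then show ?case by simp
next
  case (Cons k ks)
  have k: "k < n" using Cons.prems by simp
  have yk: "y k \<in> Qsf n" "Lv n a (y k) = z k" using Cons.prems k by auto
  have yk1: "1 + y k \<in> Qsf n" using yk Qsf_add Qsf_one by blast
  have "\<forall>i<n. mut_y k y B i \<in> Qsf n \<and> Lv n a (mut_y k y B i) = mutr k z B i"
  proof (intro allI impI)
    fix i assume i: "i < n"
    have yi: "y i \<in> Qsf n" "Lv n a (y i) = z i" using Cons.prems i by auto
    show "mut_y k y B i \<in> Qsf n \<and> Lv n a (mut_y k y B i) = mutr k z B i"
    proof (cases "i = k")
      case True
      then show ?thesis using yk by (simp add: mut_y_def mutr_def Qsf_inverse Lv_inverse[OF a])
    next
      case False
      have m1: "y k powi pos (B k i) \<in> Qsf n" "(1 + y k) powi (- B k i) \<in> Qsf n"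
        using yk yk1 Qsf_powi by auto
      have "Lv n a (y i * y k powi pos (B k i) * (1 + y k) powi (- B k i))
          = z i * z k powi pos (B k i) * (1 + z k) powi (- B k i)"
        using yi yk yk1 m1 Qsf_mult
        by (simp add: Lv_mult[OF a] Lv_powi[OF a] Lv_add[OF a] Lv_one[OF a] Qsf_one)
      moreover have "y i * y k powi pos (B k i) * (1 + y k) powi (- B k i) \<in> Qsf n"
        using yi m1 Qsf_mult by blast
      ultimately show ?thesis using False by (simp add: mut_y_def mutr_def)
    qed
  qed
  then show ?case using Cons.IH[of "mut_y k y B" "mutr k z B" "mut_B k B"] Cons.prems by simp
qed

lemma mutr_pos: "(\<And>l. 0 < z l) \<Longrightarrow> 0 < mutr k z B i"
  unfolding mutr_def by (simp add: add_pos_pos)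

lemma mutseqR_pos: "(\<And>l. 0 < z l) \<Longrightarrow> 0 < fst (mutseqR (z, B) ks) i"
proof (induction ks arbitrary: z B)
  case Nil then show ?case by simp
next
  case (Cons k ks) then show ?case using mutr_pos by simp
qed

lemma pos_diff: "pos x - pos (- x) = x"
  by (simp add: pos_def max_def)

lemma mut_B_invol: "mut_B k (mut_B k B) = B"
proof (intro ext)
  fix i j
  show "mut_B k (mut_B k B) i j = B i j"
  proof (cases "i = k \<or> j = k")
    case True then show ?thesis by (auto simp: mut_B_def)
  next
    case False
    have h1: "pos (B k j) = B k j + pos (- B k j)" using pos_diff[of "B k j"] by simp
    have h2: "pos (B i k) = B i k + pos (- B i k)" using pos_diff[of "B i k"] by simp
    show ?thesis using False by (simp add: mut_B_def h1 h2 algebra_simps)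
  qed
qed

lemma mutr_invol:
  assumes z: "\<And>l. 0 < z l"
  shows "mutr k (mutr k z B) (mut_B k B) = z"
proof (intro ext)
  fix i
  show "mutr k (mutr k z B) (mut_B k B) i = z i"
  proof (cases "i = k")
    case True then show ?thesis by (simp add: mutr_def)
  next
    case False
    define u where "u = z k"
    define b where "b = B k i"
    have u: "0 < u" using z by (simp add: u_def)
    have bk: "mut_B k B k i = - b" by (simp add: mut_B_def b_def)
    have "mutr k (mutr k z B) (mut_B k B) i
        = (z i * u powi pos b * (1 + u) powi (- b)) * (inverse u) powi pos (- b) * (1 + inverse u) powi b"
      using False by (simp add: mutr_def bk u_def b_def)
    also have "(1 + inverse u) = (1 + u) * inverse u" using u by (simp add: field_simps)
    also have "((1 + u) * inverse u) powi b = (1 + u) powi b * u powi (- b)"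
      by (simp add: power_int_mult_distrib power_int_inverse power_int_minus)
    also have "(inverse u) powi pos (- b) = u powi (- pos (- b))"
      by (simp add: power_int_inverse power_int_minus)
    also have "z i * u powi pos b * (1 + u) powi (- b) * u powi (- pos (- b)) * ((1 + u) powi b * u powi (- b))
        = z i * (u powi pos b * u powi (- pos (- b)) * u powi (- b)) * ((1 + u) powi (- b) * (1 + u) powi b)"
      by (simp add: mult_ac)
    also have "u powi pos b * u powi (- pos (- b)) * u powi (- b) = u powi (pos b + (- pos (- b)) + (- b))"
    proof -
      have unz: "u \<noteq> 0" using u by simp
      have "u powi (pos b + (- pos (- b)) + (- b)) = u powi (pos b + (- pos (- b))) * u powi (- b)"
        by (rule power_int_add) (simp add: unz)
      also have "u powi (pos b + (- pos (- b))) = u powi pos b * u powi (- pos (- b))"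
        by (rule power_int_add) (simp add: unz)
      finally show ?thesis by simp
    qed
    also have "pos b + (- pos (- b)) + (- b) = 0" using pos_diff[of b] by simp
    also have "(1 + u) powi (- b) * (1 + u) powi b = (1 + u) powi (- b + b)"
      by (rule power_int_add[symmetric]) (use u in simp)
    finally show ?thesis by simp
  qed
qed

lemma mutseqR_append: "mutseqR s (xs @ ys) = mutseqR (mutseqR s xs) ys"
proof (induction xs arbitrary: s)
  case Nil then show ?case by simp
next
  case (Cons k xs) then show ?case by (cases s) simp
qed

lemma mutseqR_invol:
  "(\<And>l. 0 < z l) \<Longrightarrow> mutseqR (mutseqR (z, B) ks) (rev ks) = (z, B)"
proof (induction ks arbitrary: z B)
  case Nil then show ?case by simp
next
  case (Cons k ks)
  have p: "\<And>l. 0 < mutr k z B l" using mutr_pos Cons.prems by blast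
  have "mutseqR (mutseqR (z, B) (k # ks)) (rev (k # ks))
      = mutseqR (mutseqR (mutseqR (mutr k z B, mut_B k B) ks) (rev ks)) [k]"
    by (simp add: mutseqR_append)
  also have "\<dots> = mutseqR (mutr k z B, mut_B k B) [k]" using Cons.IH[OF p] by simp
  also have "\<dots> = (z, B)" using mutr_invol[OF Cons.prems] mut_B_invol by simp
  finally show ?case .
qed

lemma mutseqR_snd: "snd (mutseqR (z, B) ks) = snd (mutseqR (z', B) ks)"
  by (induction ks arbitrary: z z' B) auto

lemma surj_real:
  assumes z: "\<And>l. 0 < z l"
  obtains a where "\<And>l. 0 < a l" "fst (mutseqR (a, B0) ks) = z"
proof -
  define Bt where "Bt = snd (mutseqR (\<lambda>_. 1, B0) ks)"
  define a where "a = fst (mutseqR (z, Bt) (rev ks))"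
  define Bx where "Bx = snd (mutseqR (z, Bt) (rev ks))"
  have apos: "\<And>l. 0 < a l" unfolding a_def using mutseqR_pos z by blast
  have one: "\<And>l::nat. (0::real) < 1" by simp
  have "Bx = snd (mutseqR (mutseqR (\<lambda>_. 1, B0) ks) (rev ks))"
    unfolding Bx_def Bt_def
    by (metis mutseqR_snd prod.collapse)
  also have "\<dots> = B0" using mutseqR_invol[of "\<lambda>_. 1" B0 ks] by simp
  finally have "Bx = B0" .
  have "mutseqR (a, Bx) ks = mutseqR (mutseqR (z, Bt) (rev ks)) (rev (rev ks))"
    by (simp add: a_def Bx_def)
  also have "\<dots> = (z, Bt)" by (rule mutseqR_invol[OF z])
  finally have "fst (mutseqR (a, B0) ks) = z" using \<open>Bx = B0\<close> by simp
  then show ?thesis by (rule that[OF apos])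
qed



lemma lookup_expv: "Poly_Mapping.lookup (expv n f) l = (if l < n then f l else 0)"
proof -
  have "finite {l. (if l < n then f l else 0) \<noteq> 0}"
    by (rule finite_subset[of _ "{..<n}"]) auto
  then show ?thesis unfolding expv_def by simp
qed

lemma alpha_zero:
  fixes \<alpha> \<beta>1 \<beta>2 :: "nat \<Rightarrow>\<^sub>0 nat" and b :: "nat \<Rightarrow> int"
  assumes "expv n (\<lambda>l. nat (pos (b l))) = \<alpha> + \<beta>1"
    and "expv n (\<lambda>l. nat (pos (- b l))) = \<alpha> + \<beta>2"
  shows "\<alpha> = 0"
proof (rule poly_mapping_eqI)
  fix l
  have 1: "Poly_Mapping.lookup \<alpha> l \<le> (if l < n then nat (pos (b l)) else 0)"
    using arg_cong[OF assms(1), of "\<lambda>m. Poly_Mapping.lookup m l"] by (simp add: lookup_expv lookup_add)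
  have 2: "Poly_Mapping.lookup \<alpha> l \<le> (if l < n then nat (pos (- b l)) else 0)"
    using arg_cong[OF assms(2), of "\<lambda>m. Poly_Mapping.lookup m l"] by (simp add: lookup_expv lookup_add)
  have "min (nat (pos (b l))) (nat (pos (- b l))) = 0" by (simp add: pos_def)
  then show "Poly_Mapping.lookup \<alpha> l = Poly_Mapping.lookup 0 l"
    using 1 2 by (auto split: if_splits)
qed

fun lvk :: "(rf \<Rightarrow> real) \<Rightarrow> rf mkey \<Rightarrow> real" where
  "lvk L (MK p a) = L p"

theorem lemma5p4:
  fixes n :: nat and B0 :: "nat \<Rightarrow> nat \<Rightarrow> int" and ks :: "nat list"
  assumes "skew_symmetrizable n B0"
    and "set ks \<subseteq> {..<n}"
  shows "coprime_seed n (Qsf n) (fst (mut_seq (yvar, B0) ks)) (snd (mut_seq (yvar, B0) ks))"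
  unfolding coprime_seed_def
proof (intro allI impI ballI, elim conjE)
  fix i j d
  assume i: "i < n" and j: "j < n" and ij: "i \<noteq> j" and dZ: "d \<in> ZPX n (Qsf n)"
  define y where "y = fst (mut_seq (yvar, B0) ks)"
  define B where "B = snd (mut_seq (yvar, B0) ks)"
  define P where "P = Qsf n"
  assume "rdvd (ZPX n (Qsf n)) d (Ppoly n (fst (mut_seq (yvar, B0) ks)) (snd (mut_seq (yvar, B0) ks)) i)"
    and "rdvd (ZPX n (Qsf n)) d (Ppoly n (fst (mut_seq (yvar, B0) ks)) (snd (mut_seq (yvar, B0) ks)) j)"
  then obtain e e' where eZ: "e \<in> ZPX n P" and Pi: "Ppoly n y B i = d * e"
    and e'Z: "e' \<in> ZPX n P" and Pj: "Ppoly n y B j = d * e'"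
    unfolding rdvd_def y_def B_def P_def by blast
  define z where "z = (\<lambda>l. if l = i then (2::real) else 1)"
  have zpos: "\<And>l. 0 < z l" by (simp add: z_def)
  obtain a where apos: "\<And>l. 0 < a l" and za: "fst (mutseqR (a, B0) ks) = z"
    by (rule surj_real[of z B0 ks, OF zpos]) blast
  define L where "L = Lv n a"
  have tr: "snd (mut_seq (yvar, B0) ks) = snd (mutseqR (a, B0) ks) \<and>
    (\<forall>l<n. fst (mut_seq (yvar, B0) ks) l \<in> Qsf n \<and> Lv n a (fst (mut_seq (yvar, B0) ks) l) = fst (mutseqR (a, B0) ks) l)"
    by (rule transport[OF apos assms(2)]) (simp add: yvar_Qsf Lv_yvar[OF apos])
  have yP: "\<And>l. l < n \<Longrightarrow> y l \<in> P" and yL: "\<And>l. l < n \<Longrightarrow> L (y l) = z l"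
    using tr za unfolding y_def P_def L_def by auto
  have Lm: "\<And>x y. x \<in> P \<Longrightarrow> y \<in> P \<Longrightarrow> L (x * y) = L x * L y"
    unfolding L_def P_def by (rule Lv_mult[OF apos])
  have Lp: "\<And>x. x \<in> P \<Longrightarrow> 0 < L x" unfolding L_def P_def by (rule Lv_pos[OF apos])
  have go: "good_ord ltT (KS P)" by (rule good_ltT) (simp add: Qsf_posr P_def)
  have lvm: "\<And>x y. x \<in> KS P \<Longrightarrow> y \<in> KS P \<Longrightarrow> lvk L (x + y) = lvk L x * lvk L y"
    by (auto simp: KS_def Lm)
  have lvp: "\<And>x. x \<in> KS P \<Longrightarrow> 0 < lvk L x" by (auto simp: KS_def Lp)
  have ZK: "\<And>f. f \<in> ZPX n P \<Longrightarrow> Poly_Mapping.keys f \<subseteq> KS P"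
  proof
    fix f x assume "f \<in> ZPX n P" "x \<in> Poly_Mapping.keys f"
    then have "case x of MK a \<alpha> \<Rightarrow> a \<in> P \<and> Poly_Mapping.keys \<alpha> \<subseteq> {..<n}" by (auto simp: ZPX_def)
    then show "x \<in> KS P" by (cases x) (auto simp: KS_def)
  qed
  have dZ': "d \<in> ZPX n P" using dZ by (simp add: P_def)
  have lev: "\<And>l. l < n \<Longrightarrow> L (y l / (1 + y l)) = z l / (1 + z l) \<and> L (1 / (1 + y l)) = 1 / (1 + z l)"
  proof -
    fix l assume l: "l < n"
    have y1: "1 + y l \<in> Qsf n" using yP[OF l] Qsf_add Qsf_one unfolding P_def by blast
    have L1: "L (1 + y l) = 1 + z l" using yP[OF l] yL[OF l] unfolding L_def P_def
      by (simp add: Lv_add[OF apos] Lv_one[OF apos] Qsf_one)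
    show "L (y l / (1 + y l)) = z l / (1 + z l) \<and> L (1 / (1 + y l)) = 1 / (1 + z l)"
      using yP[OF l] yL[OF l] y1 L1 unfolding L_def P_def
      by (simp add: Lv_divide[OF apos] Lv_one[OF apos] Qsf_one)
  qed
  have Pi': "d * e = Poly_Mapping.single (MK (y i / (1 + y i)) (expv n (\<lambda>l. nat (pos (B l i))))) 1
        + Poly_Mapping.single (MK (1 / (1 + y i)) (expv n (\<lambda>l. nat (pos (- B l i))))) 1"
    using Pi by (simp add: Ppoly_def)
  have Pj': "d * e' = Poly_Mapping.single (MK (y j / (1 + y j)) (expv n (\<lambda>l. nat (pos (B l j))))) 1
        + Poly_Mapping.single (MK (1 / (1 + y j)) (expv n (\<lambda>l. nat (pos (- B l j))))) 1"
    using Pj by (simp add: Ppoly_def)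
  have lvi: "lvk L (MK (1 / (1 + y i)) (expv n (\<lambda>l. nat (pos (- B l i)))))
      < lvk L (MK (y i / (1 + y i)) (expv n (\<lambda>l. nat (pos (B l i)))))"
    using lev[OF i] by (simp add: z_def)
  have lvj: "lvk L (MK (y j / (1 + y j)) (expv n (\<lambda>l. nat (pos (B l j)))))
      = lvk L (MK (1 / (1 + y j)) (expv n (\<lambda>l. nat (pos (- B l j)))))"
    using lev[OF j] ij by (simp add: z_def)
  obtain x c F1 F2 where dx: "d = Poly_Mapping.single x c" and c: "c = 1 \<or> c = -1"
    and xd: "x \<in> Poly_Mapping.keys d" and F1: "F1 \<in> Poly_Mapping.keys e"
    and k1: "MK (y i / (1 + y i)) (expv n (\<lambda>l. nat (pos (B l i)))) = x + F1"
    and F2: "F2 \<in> Poly_Mapping.keys e"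
    and k2: "MK (1 / (1 + y i)) (expv n (\<lambda>l. nat (pos (- B l i)))) = x + F2"
    by (rule main_alg[OF go lvm lvp ZK[OF dZ'] ZK[OF eZ] ZK[OF e'Z] Pi' lvi Pj' lvj])
  obtain p \<alpha> where x: "x = MK p \<alpha>" by (cases x)
  have pP: "p \<in> P" using ZK[OF dZ'] xd x by (auto simp: KS_def)
  obtain q1 \<beta>1 where f1: "F1 = MK q1 \<beta>1" by (cases F1)
  obtain q2 \<beta>2 where f2: "F2 = MK q2 \<beta>2" by (cases F2)
  have "expv n (\<lambda>l. nat (pos (B l i))) = \<alpha> + \<beta>1" using k1 x f1 by simp
  moreover have "expv n (\<lambda>l. nat (pos (- B l i))) = \<alpha> + \<beta>2" using k2 x f2 by simp
  ultimately have "\<alpha> = 0" by (rule alpha_zero)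
  then have "d = Poly_Mapping.single (MK p 0) c" using dx x by simp
  then show "d \<in> ZPunits (Qsf n)" using c pP unfolding ZPunits_def P_def by blast
qed

end
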